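(* Let $a\neq b$ be decimal digits and $n\ge 2$, and suppose $B_n(a,b)$ is an absolute prime. Let $p$ be a prime such that $n>p-1$, $10$ is a primitive root modulo $p$ (i.e. $h(p)=p-1$), and $\gcd(a,p)=1$. Then $(p-1)\mid n$.
   Context: For a positive integer $N$ with decimal representation $d_1d_2\dots d_n$ (digits $d_k\in\{0,\dots,9\}$, $d_1\neq 0$), a permutation of the digits of $N$ is any integer $\sum_{k=1}^{n} d_{\sigma(k)}10^{n-k}$ with $\sigma$ a permutation of $\{1,\dots,n\}$. $N$ is called an absolute prime if every integer obtained by a permutation of the digits of $N$ (including $N$ itself) is prime. The repunit $A_n=(10^n-1)/9$ is the $n$-digit integer all of whose digits are $1$. For digits $a,b$ and $n\ge 1$, $B_n(a,b)=a\cdot A_n+(b-a)$ is the $n$-digit integer whose first $n-1$ digits are $a$ and whose last digit is $b$. For a prime $p\notin\{2,5\}$, $h(p)$ denotes the multiplicative order of $10$ modulo $p$; $10$ is a primitive root modulo $p$ when $h(p)=p-1$. *)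

theory Defs
  imports "HOL-Number_Theory.Number_Theory" "HOL-Library.Multiset"
begin

fun dec_digits :: "nat \<Rightarrow> nat list" where
  "dec_digits m = (if m < 10 then [m] else dec_digits (m div 10) @ [m mod 10])"

definition from_digits :: "nat list \<Rightarrow> nat" where
  "from_digits ds = foldl (\<lambda>acc d. 10 * acc + d) 0 ds"

definition absolute_prime :: "nat \<Rightarrow> bool" where
  "absolute_prime N \<longleftrightarrow> N > 0 \<and>
     (\<forall>ys. mset ys = mset (dec_digits N) \<longrightarrow> prime (from_digits ys))"

definition repunit :: "nat \<Rightarrow> nat" where
  "repunit n = (10 ^ n - 1) div 9"

text \<open>B_n(a,b) = a A_n + (b - a); computed in nat as (a A_n + b) - a, exact for n >= 1.\<close>
definition B :: "nat \<Rightarrow> nat \<Rightarrow> nat \<Rightarrow> nat" where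
  "B n a b = a * repunit n + b - a"

end

theory Submission
  imports Defs
begin

declare dec_digits.simps[simp del]

definition R :: "nat \<Rightarrow> nat" where "R m = (\<Sum>i<m. 10^i)"

lemma R_Suc: "R (Suc m) = 10 * R m + 1"
  by (induction m) (simp_all add: R_def)

lemma R_Suc': "R (Suc m) = R m + 10^m"
  by (simp add: R_def)

lemma R_ge: "R (Suc m) \<ge> 10^m"
  by (simp add: R_Suc')

lemma nine_R: "9 * R m = 10^m - 1"
proof (induction m)
  case 0 then show ?case by (simp add: R_def)
next
  case (Suc m)
  have h: "(1::nat) \<le> 10^m" by simp
  have e: "9 * R m + 1 = 10^m" using Suc h by linarith
  have "(10::nat)^Suc m = 10*(9*R m+1)" using e by simp
  then show ?case by (simp add: R_Suc)
qed

lemma nine_R_int: "9 * int (R m) = 10^m - 1"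
proof -
  have "(1::nat) \<le> 10^m" by simp
  then have "int (9 * R m) = int (10^m) - 1" by (simp add: nine_R of_nat_diff)
  then show ?thesis by simp
qed

lemma repunit_R: "repunit m = R m"
  unfolding repunit_def nine_R[symmetric] by simp

lemma foldl_aux: "foldl (\<lambda>acc d. 10 * acc + d) (c::nat) ys = c * 10^length ys + foldl (\<lambda>acc d. 10 * acc + d) 0 ys"
proof (induction ys arbitrary: c)
  case Nil then show ?case by simp
next
  case (Cons x ys)
  have "foldl (\<lambda>acc d. 10 * acc + d) c (x # ys) = (10 * c + x) * 10^length ys + foldl (\<lambda>acc d. 10 * acc + d) 0 ys"
    using Cons.IH[of "10 * c + x"] by simp
  moreover have "foldl (\<lambda>acc d. 10 * acc + d) 0 (x # ys) = x * 10^length ys + foldl (\<lambda>acc d. 10 * acc + d) 0 ys"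
    using Cons.IH[of x] by simp
  ultimately show ?case by (simp add: algebra_simps)
qed

lemma fd_app: "from_digits (xs @ ys) = from_digits xs * 10^length ys + from_digits ys"
  unfolding from_digits_def foldl_append by (rule foldl_aux)

lemma fd_single: "from_digits [x] = x"
  by (simp add: from_digits_def)

lemma fd_Cons: "from_digits (x # ys) = x * 10^length ys + from_digits ys"
  using fd_app[of "[x]" ys] by (simp add: fd_single)

lemma fd_rep: "from_digits (replicate m a) = a * R m"
proof (induction m)
  case 0 then show ?case by (simp add: from_digits_def R_def)
next
  case (Suc m)
  then show ?case by (simp add: fd_Cons R_Suc' algebra_simps)
qed

lemma dd_small: "m < 10 \<Longrightarrow> dec_digits m = [m]"
  by (subst dec_digits.simps) simp

lemma dec_fd: "ds \<noteq> [] \<Longrightarrow> \<forall>d\<in>set ds. d < 10 \<Longrightarrow> hd ds \<noteq> 0 \<Longrightarrow> dec_digits (from_digits ds) = ds"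
proof (induction ds rule: rev_induct)
  case Nil then show ?case by simp
next
  case (snoc x xs)
  show ?case
  proof (cases "xs = []")
    case True
    then show ?thesis using snoc by (simp add: fd_single dd_small)
  next
    case False
    have IH: "dec_digits (from_digits xs) = xs" using snoc False by simp
    have "from_digits xs \<noteq> 0"
    proof
      assume "from_digits xs = 0"
      then have "xs = [0]" using IH by (simp add: dd_small)
      then show False using snoc False by simp
    qed
    moreover have x: "x < 10" using snoc by simp
    ultimately have v: "from_digits (xs @ [x]) = 10 * from_digits xs + x" "from_digits (xs @ [x]) \<ge> 10"
      by (simp_all add: fd_app fd_single)
    have "dec_digits (from_digits (xs @ [x])) = dec_digits (from_digits (xs @ [x]) div 10) @ [from_digits (xs @ [x]) mod 10]"
      using v by (subst dec_digits.simps) simp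
    also have "\<dots> = xs @ [x]" using v x IH by simp
    finally show ?thesis .
  qed
qed


lemma fd_V: "from_digits (replicate j a @ b # replicate k a) = (a * R j * 10 + b) * 10^k + a * R k"
  by (simp add: fd_app fd_Cons fd_rep algebra_simps)

lemma V9: "9 * int (from_digits (replicate j a @ b # replicate k a)) =
   int a * (10^(j+1+k) - 1) + 9 * (int b - int a) * 10^k"
proof -
  have hj: "9 * int (R j) = 10^j - 1" and hk: "9 * int (R k) = 10^k - 1" by (rule nine_R_int)+
  have "9 * int (from_digits (replicate j a @ b # replicate k a))
      = 10 * int a * (9 * int (R j)) * 10^k + 9 * int b * 10^k + int a * (9 * int (R k))"
    by (simp add: fd_V algebra_simps)
  also have "\<dots> = 10 * int a * (10^j - 1) * 10^k + 9 * int b * 10^k + int a * (10^k - 1)"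
    by (simp only: hj hk)
  also have "\<dots> = int a * (10^(j+1+k) - 1) + 9 * (int b - int a) * 10^k"
    by (simp add: power_add algebra_simps)
  finally show ?thesis .
qed

lemma V_bound:
  assumes "a \<ge> 1" "j + k \<ge> 1"
  shows "from_digits (replicate j a @ b # replicate k a) \<ge> 10^(j+k-1)"
proof (cases j)
  case 0
  then obtain k' where k: "k = Suc k'" using assms by (cases k) auto
  have "10^(j+k-1) = (10::nat)^k'" using 0 k by simp
  also have "\<dots> \<le> R k" using R_ge k by simp
  also have "\<dots> \<le> a * R k" using assms by simp
  also have "\<dots> \<le> from_digits (replicate j a @ b # replicate k a)" by (simp add: fd_V)
  finally show ?thesis .
next
  case (Suc j')
  have "10^(j+k-1) \<le> (10::nat)^(j'+1+k)" using Suc by (intro power_increasing) auto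
  also have "\<dots> = 10^j' * 10 * 10^k" by (simp add: power_add)
  also have "\<dots> \<le> (a * R j * 10) * 10^k"
  proof -
    have "10^j' \<le> R j" using R_ge Suc by simp
    also have "\<dots> \<le> a * R j" using assms by simp
    finally show ?thesis by simp
  qed
  also have "\<dots> \<le> from_digits (replicate j a @ b # replicate k a)" by (simp add: fd_V algebra_simps)
  finally show ?thesis .
qed

lemma V_mset: "mset (replicate j a @ b # replicate k a) = mset (replicate (j+k) a @ [b])"
  by (simp add: replicate_add)

lemma ten_pow: "10 * m \<le> (10::nat)^m"
proof (induction m)
  case (Suc m) then show ?case by (cases m) auto
qed simp


theorem lemma6:
  fixes a b n p :: nat
  assumes "a < 10" and "b < 10" and "a \<noteq> b" and "n \<ge> 2"
    and "absolute_prime (B n a b)"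
    and "prime p" and "p \<noteq> 2" and "p \<noteq> 5"
    and "n > p - 1"
    and "ord p 10 = p - 1"
    and "gcd a p = 1"
  shows "(p - 1) dvd n"
proof -
  obtain m where n: "n = Suc m" and m1: "m \<ge> 1" using assms(4) by (cases n) auto
  define P where "P k = from_digits (replicate (m-k) a @ b # replicate k a)" for k
  have p1: "p > 1" using assms(6) prime_gt_1_nat by blast
  have a1: "a \<ge> 1"
  proof (rule ccontr)
    assume "\<not> a \<ge> 1"
    then have "a = 0" by simp
    then show False using assms(11) p1 by simp
  qed
  have Bv: "B n a b = from_digits (replicate m a @ [b])"
    unfolding B_def repunit_R n R_Suc by (simp add: fd_app fd_rep fd_single algebra_simps)
  have dB: "dec_digits (B n a b) = replicate m a @ [b]"
    unfolding Bv
  proof (rule dec_fd)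
    show "\<forall>d\<in>set (replicate m a @ [b]). d < 10" using assms(1,2) by auto
    show "hd (replicate m a @ [b]) \<noteq> 0" using m1 a1 by (cases m) auto
  qed simp
  have primeP: "prime (P k)" if "k \<le> m" for k
  proof -
    have "mset (replicate (m-k) a @ b # replicate k a) = mset (dec_digits (B n a b))"
      unfolding dB V_mset using that by simp
    then show ?thesis using assms(5) unfolding absolute_prime_def P_def by blast
  qed
  have P9: "9 * int (P k) = int a * (10^n - 1) + 9 * (int b - int a) * 10^k" if "k \<le> m" for k
  proof -
    have "m - k + 1 + k = n" using that n by simp
    then show ?thesis unfolding P_def V9 by simp
  qed
  have Pb: "P k \<ge> 10^(m-1)" if "k \<le> m" for k
  proof -
    have "P k \<ge> 10^(m - k + k - 1)" unfolding P_def using V_bound[OF a1, of "m-k" k b] that m1 by simp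
    then show ?thesis using that by simp
  qed
  have podd: "odd p" using prime_odd_nat[OF assms(6)] assms(7) p1 by simp
  have p3: "p \<noteq> 3"
  proof
    assume "p = 3"
    then have "ord p 10 = 1" by (simp add: ord_eq_Suc_0_iff cong_def)
    then show False using assms(10) \<open>p = 3\<close> by simp
  qed
  have p7: "p \<ge> 7" using podd p1 p3 assms(8) by presburger
  have mp: "m \<ge> p - 1" using assms(9) n by simp
  have big: "10^(m-1) > p"
  proof -
    have "p < 10 * (m - 1)" using mp p7 by simp
    also have "\<dots> \<le> 10^(m-1)" by (rule ten_pow)
    finally show ?thesis .
  qed
  have ndvd: "\<not> p dvd P k" if "k \<le> m" for k
  proof
    assume "p dvd P k"
    then have "p = 1 \<or> p = P k" using primeP[OF that] prime_nat_iff by blast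
    then show False using p1 Pb[OF that] big by auto
  qed
  have Podd: "odd (P k)" if "k \<le> m" for k
  proof -
    have "P k > 2" using Pb[OF that] big p7 by simp
    then show ?thesis using prime_odd_nat[OF primeP[OF that]] by simp
  qed
  have p9: "\<not> p dvd 9"
  proof
    assume "p dvd 9"
    then have "p dvd 3^2" by simp
    then have "p dvd 3" using prime_dvd_power[OF assms(6)] by blast
    then show False using p7 by (auto dest: dvd_imp_le)
  qed
  show ?thesis
  proof (rule ccontr)
    assume nd: "\<not> (p - 1) dvd n"
    show False
    proof (cases "int p dvd int b - int a")
      case True
      then obtain t where t: "int b - int a = int p * t" by blast
      have "t = 1 \<or> t = -1"
      proof -
        have "t \<noteq> 0" using t assms(3) by auto
        moreover have "\<bar>t\<bar> < 2"
        proof (rule ccontr)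
          assume "\<not> \<bar>t\<bar> < 2"
          then have "\<bar>int p * t\<bar> \<ge> int p * 2" by (simp add: abs_mult mult_left_mono)
          then show False using t p7 assms(1,2) by simp
        qed
        ultimately show ?thesis by auto
      qed
      then have "int b - int a = int p \<or> int b - int a = - int p" using t by auto
      then have "p = 7 \<or> p = 9" and bb: "int b - int a = int p \<or> int b - int a = - int p"
        using podd p7 assms(1,2) by presburger+
      then have "even b \<or> even a" using a1 assms(1,2) by presburger
      then show False
      proof
        assume "even b"
        have "P 0 = a * R m * 10 + b" using fd_V[of m a b 0] by (simp add: P_def R_def)
        then show False using Podd[of 0] \<open>even b\<close> by simp
      qed (use m1 Podd[of 1] fd_V[of "m-1" a b 1] in \<open>simp add: P_def R_def\<close>)
    next
      case False
      have pint: "prime (int p)" using assms(6) by simp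
      define u where "u = 9 * (int b - int a)"
      define w where "w = int a * (10^n - 1)"
      have "\<not> int p dvd u"
      proof
        assume "int p dvd u"
        then have "int p dvd 9 \<or> int p dvd (int b - int a)"
          unfolding u_def using prime_dvd_mult_iff[OF pint] by blast
        moreover have "\<not> int p dvd 9"
        proof
          assume "int p dvd 9"
          then have "int p dvd int 9" by simp
          then have "p dvd 9" by (simp only: int_dvd_int_iff)
          then show False using p9 by simp
        qed
        ultimately show False using False by blast
      qed
      then have "coprime (int p) u" using prime_imp_coprime[OF pint] by blast
      then have "coprime u (int p)" by (simp add: coprime_commute)
      then obtain t where ut: "[u * t = 1] (mod int p)" using cong_solve_coprime_int by blast
      have nw: "\<not> int p dvd w"
      proof
        assume "int p dvd w"
        then have "int p dvd int a \<or> int p dvd (10^n - 1)"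
          unfolding w_def using prime_dvd_mult_iff[OF pint] by blast
        then show False
        proof
          assume "int p dvd int a"
          then have "p dvd a" by simp
          then have "p dvd gcd a p" by simp
          then show False using assms(11) p1 by simp
        next
          assume "int p dvd (10^n - 1)"
          then have "[int (10^n) = int 1] (mod int p)" by (simp add: cong_iff_dvd_diff)
          then have "[10^n = 1] (mod p)" using cong_int_iff by blast
          then have "ord p 10 dvd n" using ord_divides by blast
          then show False using nd assms(10) by simp
        qed
      qed
      define c where "c = nat ((- w * t) mod int p)"
      have cw: "[- w * t * u = - w] (mod int p)"
      proof -
        have "[- w * (t * u) = - w * 1] (mod int p)"
          using ut by (intro cong_mult cong_refl) (simp add: mult.commute)
        then show ?thesis by (simp add: mult.assoc)
      qed
      have c0: "(- w * t) mod int p \<noteq> 0"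
      proof
        assume "(- w * t) mod int p = 0"
        then have "int p dvd - w * t * u" by (simp add: mod_eq_0_iff_dvd)
        then have "int p dvd - w" using cong_dvd_iff[OF cw] by simp
        then show False using nw by simp
      qed
      have cint: "int c = (- w * t) mod int p" unfolding c_def using p1 by simp
      have ctot: "c \<in> totatives p"
      proof -
        have "(- w * t) mod int p \<ge> 0" "(- w * t) mod int p < int p" using p1 by simp_all
        then have "int c > 0" "int c < int p" using cint c0 by simp_all
        then show ?thesis unfolding totatives_prime[OF assms(6)] by simp
      qed
      have "ord p 10 > 0" using assms(10) p7 by simp
      then have cop: "coprime p 10" by (simp only: ord_gt_0_iff)
      have prr: "residue_primroot p 10"
        unfolding residue_primroot_def using p1 cop assms(10) totient_prime[OF assms(6)] by simp
      have "(\<lambda>i. 10 ^ i mod p) ` {..<totient p} = totatives p"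
        using residue_primroot_is_generator[OF p1 prr] by (simp add: bij_betw_def)
      with ctot obtain k where k: "k < totient p" "10^k mod p = c" by (metis (no_types, lifting) imageE lessThan_iff)
      have km: "k \<le> m" using k(1) totient_prime[OF assms(6)] mp by simp
      have "int (10^k) mod int p = (- w * t) mod int p" using k(2) cint by (metis of_nat_mod)
      then have "[10^k = - w * t] (mod int p)" by (simp add: cong_def)
      then have "[u * 10^k = u * (- w * t)] (mod int p)" by (intro cong_mult cong_refl)
      also have "u * (- w * t) = - w * t * u" by (simp add: algebra_simps)
      also note cw
      finally have "[u * 10^k = - w] (mod int p)" .
      then have "int p dvd w + u * 10^k" by (simp add: cong_iff_dvd_diff add.commute)
      then have "int p dvd 9 * int (P k)" unfolding P9[OF km] u_def w_def by (simp add: algebra_simps)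
      then have "int p dvd int (9 * P k)" by simp
      then have "p dvd 9 * P k" by (simp only: int_dvd_int_iff)
      then show False using prime_dvd_mult_iff[OF assms(6)] p9 ndvd[OF km] by blast
    qed
  qed
qed

end
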